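(* Let $M\in\mathcal M$, let $v_1,\dots,v_n\in E_1$ be generic linear forms, and let $i\ge1$ and $k$ be integers. If $\delta_{i,p,k}=0$ for all $1\le p\le n-1$, then $\delta_{i+t,p,k+t}=0$ for all $1\le p\le n-1$ and all $t\ge0$.
   Context: $E$ is the exterior algebra over an infinite field $K$ on an $n$-dimensional space with basis $e_1,\dots,e_n$. $\mathcal M$ is the category of finitely generated graded $E$-modules $M$ (left and right) with $ax=(-1)^{\deg a\cdot\deg x}xa$ for homogeneous $a\in E$, $x\in M$. For linear forms $v_1,\dots,v_m$, the Cartan complex $C_\bullet(v_1,\dots,v_m;E)$ is the divided power algebra $E\langle x_1,\dots,x_m\rangle$ (free $E$-module with basis $x^{(a)}=x_1^{(a_1)}\cdots x_m^{(a_m)}$, homological degree $\sum a_j$, each $x_j$ of internal degree 1, relations $x_j^{(s)}x_j^{(t)}=\frac{(s+t)!}{s!t!}x_j^{(s+t)}$), with $E$-linear differential $\partial(x^{(a)})=\sum_{a_j>0}v_j\,x_1^{(a_1)}\cdots x_j^{(a_j-1)}\cdots x_m^{(a_m)}$; $C_\bullet(v_1,\dots,v_m;M)=C_\bullet(v_1,\dots,v_m;E)\otimes_E M$, with homology $H_i(v_1,\dots,v_m;M)$. Write $H_i(p)=H_i(v_1,\dots,v_p;M)$. For $1\le p\le n-1$ there is a long exact sequence $\cdots\to H_i(p)\to H_i(p+1)\to H_{i-1}(p+1)(-1)\xrightarrow{\gamma_{i-1,p}}H_{i-1}(p)\to\cdots$, where $\gamma_{i,p}:H_i(p+1)(-1)\to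 H_i(p)$ sends the class of a cycle $z=g_0+g_1x_{p+1}+\cdots+g_ix_{p+1}^{(i)}$ (with $g_s\in C_\bullet(v_1,\dots,v_p;M)$) to $[g_0v_{p+1}]$. Set $\delta_{i,p,k}=\dim_K(\mathrm{Im}\,\gamma_{i,p})_k$ for $i>0$. *)

theory Defs
  imports Complex_Main "HOL-Library.Function_Algebras"
begin

text \<open>Exterior algebra E over a field K on generators e_0,...,e_(n-1) (0-indexed).
  An element is a coefficient function on index sets S; e_S is the ordered
  wedge product of the e_j with j in S (increasing order).\<close>

type_synonym 'k ext = "nat set \<Rightarrow> 'k"

definition ext_elem :: "nat \<Rightarrow> ('k::zero) ext \<Rightarrow> bool" where
  "ext_elem n f \<longleftrightarrow> (\<forall>S. f S \<noteq> 0 \<longrightarrow> S \<subseteq> {..<n})"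

definition ext_homog :: "nat \<Rightarrow> nat \<Rightarrow> ('k::zero) ext \<Rightarrow> bool" where
  "ext_homog n d f \<longleftrightarrow> ext_elem n f \<and> (\<forall>S. f S \<noteq> 0 \<longrightarrow> card S = d)"

text \<open>Sign of e_S * e_T = sign * e_(S union T) for disjoint S, T.\<close>
definition ext_sign :: "nat set \<Rightarrow> nat set \<Rightarrow> 'k::comm_ring_1" where
  "ext_sign S T = (-1) ^ card {(s, t). s \<in> S \<and> t \<in> T \<and> t < s}"

definition ext_mult :: "('k::comm_ring_1) ext \<Rightarrow> 'k ext \<Rightarrow> 'k ext" where
  "ext_mult f g = (\<lambda>U. if finite U
      then (\<Sum>S\<in>Pow U. ext_sign S (U - S) * f S * g (U - S)) else 0)"

definition ext_const :: "'k::zero \<Rightarrow> 'k ext" where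
  "ext_const c = (\<lambda>S. if S = {} then c else 0)"

definition lin_form :: "nat \<Rightarrow> (nat \<Rightarrow> 'k::comm_monoid_add) \<Rightarrow> 'k ext" where
  "lin_form n c = (\<lambda>S. \<Sum>j<n. if S = {j} then c j else 0)"

text \<open>A finitely generated graded (left) E-module structure on the type 'm:
  act is the left E-action, Mdeg d is the homogeneous component M_d.
  K acts through E_0 = K.\<close>
definition graded_E_module ::
  "nat \<Rightarrow> (('k::field) ext \<Rightarrow> 'm::ab_group_add \<Rightarrow> 'm) \<Rightarrow> (int \<Rightarrow> 'm set) \<Rightarrow> bool" where
  "graded_E_module n act Mdeg \<longleftrightarrow>
     (\<forall>f g x. ext_elem n f \<longrightarrow> ext_elem n g \<longrightarrow>
        act (\<lambda>S. f S + g S) x = act f x + act g x) \<and>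
     (\<forall>f x y. ext_elem n f \<longrightarrow> act f (x + y) = act f x + act f y) \<and>
     (\<forall>f g x. ext_elem n f \<longrightarrow> ext_elem n g \<longrightarrow>
        act (ext_mult f g) x = act f (act g x)) \<and>
     (\<forall>x. act (ext_const 1) x = x) \<and>
     (\<forall>d. 0 \<in> Mdeg d \<and> (\<forall>x\<in>Mdeg d. \<forall>y\<in>Mdeg d. x + y \<in> Mdeg d)) \<and>
     (\<forall>a d f x. ext_homog n a f \<longrightarrow> x \<in> Mdeg d \<longrightarrow> act f x \<in> Mdeg (int a + d)) \<and>
     (\<forall>x. \<exists>D c. finite D \<and> (\<forall>d\<in>D. c d \<in> Mdeg d) \<and> x = (\<Sum>d\<in>D. c d)) \<and>
     (\<forall>D c. finite D \<longrightarrow> (\<forall>d\<in>D. c d \<in> Mdeg d) \<longrightarrow> (\<Sum>d\<in>D. c d) = 0 \<longrightarrow>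
        (\<forall>d\<in>D. c d = 0)) \<and>
     (\<exists>G. finite G \<and> (\<forall>g\<in>G. \<exists>d. g \<in> Mdeg d) \<and>
        (\<forall>x. \<exists>f. (\<forall>g\<in>G. ext_elem n (f g)) \<and> x = (\<Sum>g\<in>G. act (f g) g)))"

definition sc :: "(('k::zero) ext \<Rightarrow> 'm \<Rightarrow> 'm) \<Rightarrow> 'k \<Rightarrow> 'm \<Rightarrow> 'm" where
  "sc act c x = act (ext_const c) x"

text \<open>Right action x * f for x homogeneous of degree d, via
  e_S x = (-1)^(d |S|) x e_S.\<close>
definition ract :: "(('k::comm_ring_1) ext \<Rightarrow> 'm \<Rightarrow> 'm) \<Rightarrow> int \<Rightarrow> 'm \<Rightarrow> 'k ext \<Rightarrow> 'm" where
  "ract act d x f = act (\<lambda>S. (-1) ^ (nat \<bar>d\<bar> * card S) * f S) x"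

text \<open>Cartan complex C(v_0,...,v_(p-1); M) = direct sum of M x^(a), a multi-index
  supported in {..<p}; a chain is the function a |-> coefficient of x^(a).
  chain_sp p i k is the component of homological degree i and internal degree k
  (x_j has internal degree 1).\<close>
definition chain_sp :: "(int \<Rightarrow> 'm::zero set) \<Rightarrow> nat \<Rightarrow> nat \<Rightarrow> int \<Rightarrow> ((nat \<Rightarrow> nat) \<Rightarrow> 'm) set" where
  "chain_sp Mdeg p i k = {c. \<forall>a. c a \<noteq> 0 \<longrightarrow>
      (\<forall>j\<ge>p. a j = 0) \<and> (\<Sum>j<p. a j) = i \<and> c a \<in> Mdeg (k - int i)}"

text \<open>Differential: d(m x^(a)) = sum over a_j > 0 of v_j m x^(a - e_j).\<close>
definition cartan_d :: "('e \<Rightarrow> 'm \<Rightarrow> 'm::comm_monoid_add) \<Rightarrow> (nat \<Rightarrow> 'e) \<Rightarrow> nat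
     \<Rightarrow> ((nat \<Rightarrow> nat) \<Rightarrow> 'm) \<Rightarrow> ((nat \<Rightarrow> nat) \<Rightarrow> 'm)" where
  "cartan_d act v p c = (\<lambda>b. \<Sum>j<p. act (v j) (c (b(j := Suc (b j)))))"

definition cycles where
  "cycles act Mdeg v p i k = {c \<in> chain_sp Mdeg p i k. cartan_d act v p c = (\<lambda>_. 0)}"

definition bounds where
  "bounds act Mdeg v p i k = cartan_d act v p ` chain_sp Mdeg p (Suc i) k"

definition g0 :: "nat \<Rightarrow> ((nat \<Rightarrow> nat) \<Rightarrow> 'm::zero) \<Rightarrow> ((nat \<Rightarrow> nat) \<Rightarrow> 'm)" where
  "g0 p z = (\<lambda>a. if a p = 0 then z a else 0)"

text \<open>Representatives of the image of gamma_(i,p) in internal degree k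
  (p here is the number of forms, 1-based as in the paper: v p is v_(p+1)).\<close>
definition gamma_img where
  "gamma_img act Mdeg v p i k =
     {(\<lambda>a. ract act (k - 1 - int i) (g0 p z a) (v p)) | z.
        z \<in> cycles act Mdeg v (Suc p) i (k - 1)}"

definition chain_scale :: "(('k::zero) ext \<Rightarrow> 'm \<Rightarrow> 'm) \<Rightarrow> 'k \<Rightarrow> ((nat \<Rightarrow> nat) \<Rightarrow> 'm) \<Rightarrow> ((nat \<Rightarrow> nat) \<Rightarrow> 'm)" where
  "chain_scale act c z = (\<lambda>a. sc act c (z a))"

text \<open>delta_(i,p,k) = dim_K (Im gamma_(i,p))_k, computed inside
  H_i(p)_k = Z/B as dim(span(G union B)) - dim B.\<close>
definition delta ::
  "(('k::field) ext \<Rightarrow> 'm::ab_group_add \<Rightarrow> 'm) \<Rightarrow> (int \<Rightarrow> 'm set) \<Rightarrow> (nat \<Rightarrow> 'k ext)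
    \<Rightarrow> nat \<Rightarrow> nat \<Rightarrow> int \<Rightarrow> nat" where
  "delta act Mdeg v i p k =
     vector_space.dim (chain_scale act) (gamma_img act Mdeg v p i k \<union> bounds act Mdeg v p i k)
     - vector_space.dim (chain_scale act) (bounds act Mdeg v p i k)"

text \<open>Polynomial functions in the n x n coefficients of (v_1,...,v_n).\<close>
inductive_set poly_fun :: "nat \<Rightarrow> ((nat \<Rightarrow> nat \<Rightarrow> 'k::comm_ring_1) \<Rightarrow> 'k) set" for n where
  pf_const: "(\<lambda>_. c) \<in> poly_fun n"
| pf_var: "i < n \<Longrightarrow> j < n \<Longrightarrow> (\<lambda>x. x i j) \<in> poly_fun n"
| pf_add: "f \<in> poly_fun n \<Longrightarrow> g \<in> poly_fun n \<Longrightarrow> (\<lambda>x. f x + g x) \<in> poly_fun n"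
| pf_mult: "f \<in> poly_fun n \<Longrightarrow> g \<in> poly_fun n \<Longrightarrow> (\<lambda>x. f x * g x) \<in> poly_fun n"

end

theory Submission
  imports Defs
begin

lemma ext_const_elem[simp]: "ext_elem n (ext_const c)"
  by (auto simp add: ext_elem_def ext_const_def split: if_splits)
lemma ext_const_homog[simp]: "ext_homog n 0 (ext_const c)"
  by (simp add: ext_homog_def ext_elem_def ext_const_def)

lemma lin_form_nz: "lin_form n c S \<noteq> 0 \<Longrightarrow> \<exists>j<n. S = {j}"
proof (rule ccontr)
  assume a: "lin_form n c S \<noteq> 0" "\<not> (\<exists>j<n. S = {j})"
  then have "lin_form n c S = (\<Sum>j<n. 0)" unfolding lin_form_def
    by (intro sum.cong) auto
  with a show False by simp
qed

lemma lin_form_elem[simp]: "ext_elem n (lin_form n c)"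
  unfolding ext_elem_def by (auto dest!: lin_form_nz)
lemma lin_form_homog[simp]: "ext_homog n 1 (lin_form n c)"
  unfolding ext_homog_def by (auto dest!: lin_form_nz)

lemma ext_mult_const_left:
  assumes "\<And>S. infinite S \<Longrightarrow> (f S :: 'k::comm_ring_1) = 0"
  shows "ext_mult (ext_const c) f = (\<lambda>S. c * f S)"
proof
  fix U
  show "ext_mult (ext_const c) f U = c * f U"
  proof (cases "finite U")
    case True
    have "(\<Sum>S\<in>Pow U. ext_sign S (U - S) * ext_const c S * f (U - S)) =
          (\<Sum>S\<in>Pow U. if S = {} then c * f U else 0)"
      by (intro sum.cong) (auto simp: ext_const_def ext_sign_def)
    also have "\<dots> = c * f U" using True by (simp add: sum.delta)
    finally show ?thesis using True by (simp add: ext_mult_def)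
  next
    case False then show ?thesis using assms by (simp add: ext_mult_def)
  qed
qed

lemma ext_mult_const_right:
  assumes "\<And>S. infinite S \<Longrightarrow> (f S :: 'k::comm_ring_1) = 0"
  shows "ext_mult f (ext_const c) = (\<lambda>S. c * f S)"
proof
  fix U
  show "ext_mult f (ext_const c) U = c * f U"
  proof (cases "finite U")
    case True
    have "(\<Sum>S\<in>Pow U. ext_sign S (U - S) * f S * ext_const c (U - S)) =
          (\<Sum>S\<in>Pow U. if S = U then c * f U else 0)"
    proof (intro sum.cong refl)
      fix S assume "S \<in> Pow U"
      show "ext_sign S (U - S) * f S * ext_const c (U - S) = (if S = U then c * f U else 0)"
      proof (cases "S = U")
        case True
        have "{(s, t). s \<in> U \<and> t \<in> U - U \<and> t < s} = {}" by auto
        then show ?thesis using True by (simp add: ext_const_def ext_sign_def)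
      next
        case False
        then have "U - S \<noteq> {}" using \<open>S \<in> Pow U\<close> by auto
        then show ?thesis using False by (simp add: ext_const_def)
      qed
    qed
    also have "\<dots> = c * f U" using True by (simp add: sum.delta)
    finally show ?thesis using True by (simp add: ext_mult_def)
  next
    case False then show ?thesis using assms by (simp add: ext_mult_def)
  qed
qed

lemma ext_elem_inf: "ext_elem n f \<Longrightarrow> infinite S \<Longrightarrow> f S = 0"
  unfolding ext_elem_def using finite_subset by blast



locale cart =
  fixes n :: nat and act :: "('k::field) ext \<Rightarrow> 'm::ab_group_add \<Rightarrow> 'm"
    and Mdeg :: "int \<Rightarrow> 'm set" and cf :: "nat \<Rightarrow> nat \<Rightarrow> 'k"
  assumes gm: "graded_E_module n act Mdeg"
begin

lemmas gmD = gm[unfolded graded_E_module_def]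
lemma act_addf: "ext_elem n f \<Longrightarrow> ext_elem n g \<Longrightarrow> act (\<lambda>S. f S + g S) x = act f x + act g x"
  using conjunct1[OF gmD] by blast
lemma act_add: "ext_elem n f \<Longrightarrow> act f (x + y) = act f x + act f y"
  using conjunct1[OF conjunct2[OF gmD]] by blast
lemma act_mult: "ext_elem n f \<Longrightarrow> ext_elem n g \<Longrightarrow> act (ext_mult f g) x = act f (act g x)"
  using conjunct1[OF conjunct2[OF conjunct2[OF gmD]]] by blast
lemma act_one: "act (ext_const 1) x = x"
  using conjunct1[OF conjunct2[OF conjunct2[OF conjunct2[OF gmD]]]] by blast
lemma Mdeg_zero: "0 \<in> Mdeg d"
  using conjunct1[OF conjunct2[OF conjunct2[OF conjunct2[OF conjunct2[OF gmD]]]]] by blast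
lemma Mdeg_add: "x \<in> Mdeg d \<Longrightarrow> y \<in> Mdeg d \<Longrightarrow> x + y \<in> Mdeg d"
  using conjunct1[OF conjunct2[OF conjunct2[OF conjunct2[OF conjunct2[OF gmD]]]]] by blast
lemma Mdeg_act: "ext_homog n a f \<Longrightarrow> x \<in> Mdeg d \<Longrightarrow> act f x \<in> Mdeg (int a + d)"
  using conjunct1[OF conjunct2[OF conjunct2[OF conjunct2[OF conjunct2[OF conjunct2[OF gmD]]]]]] by blast
lemma fin_gen: "\<exists>G. finite G \<and> (\<forall>x. \<exists>f. (\<forall>g\<in>G. ext_elem n (f g)) \<and> x = (\<Sum>g\<in>G. act (f g) g))"
proof -
  have "\<exists>G. finite G \<and> (\<forall>g\<in>G. \<exists>d. g \<in> Mdeg d) \<and>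
        (\<forall>x. \<exists>f. (\<forall>g\<in>G. ext_elem n (f g)) \<and> x = (\<Sum>g\<in>G. act (f g) g))"
    using conjunct2[OF conjunct2[OF conjunct2[OF conjunct2[OF conjunct2[OF conjunct2[OF conjunct2[OF conjunct2[OF gmD]]]]]]]] .
  then show ?thesis by blast
qed

lemma act_zero: "ext_elem n f \<Longrightarrow> act f 0 = 0"
  using act_add[of f 0 0] by simp
lemma act_neg: "ext_elem n f \<Longrightarrow> act f (- x) = - act f x"
proof -
  assume f: "ext_elem n f"
  have "act f x + act f (- x) = 0" using act_add[OF f, of x "- x"] act_zero[OF f] by simp
  then show ?thesis by (metis neg_eq_iff_add_eq_0)
qed
lemma act_diff: "ext_elem n f \<Longrightarrow> act f (x - y) = act f x - act f y"
  using act_add[of f x "- y"] act_neg[of f y] by simp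
lemma act_sum: "ext_elem n f \<Longrightarrow> act f (\<Sum>i\<in>A. g i) = (\<Sum>i\<in>A. act f (g i))"
  by (induction A rule: infinite_finite_induct) (auto simp: act_zero act_add)

lemma sc_add: "sc act c (x + y) = sc act c x + sc act c y"
  unfolding sc_def by (simp add: act_add)
lemma sc_addc: "sc act (a + b) x = sc act a x + sc act b x"
proof -
  have "ext_const (a + b) = (\<lambda>S. ext_const a S + ext_const b S)"
    by (auto simp: ext_const_def)
  then show ?thesis unfolding sc_def by (simp add: act_addf)
qed
lemma sc_mult: "sc act a (sc act b x) = sc act (a * b) x"
proof -
  have "ext_mult (ext_const a) (ext_const b) = ext_const (a * b)"
    by (subst ext_mult_const_left) (auto simp: ext_const_def)
  then show ?thesis unfolding sc_def using act_mult[OF ext_const_elem ext_const_elem, of a b x] by simp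
qed
lemma sc_one: "sc act 1 x = x"
  unfolding sc_def by (simp add: act_one)

lemma vsM: "vector_space (sc act)"
  by unfold_locales (auto simp: sc_add sc_addc sc_mult sc_one)

lemma sc_zero: "sc act 0 x = 0"
  using sc_addc[of 0 0 x] by simp

lemma sc_act: "ext_elem n f \<Longrightarrow> sc act c (act f x) = act (\<lambda>S. c * f S) x"
proof -
  assume f: "ext_elem n f"
  have "ext_mult (ext_const c) f = (\<lambda>S. c * f S)"
    by (rule ext_mult_const_left) (rule ext_elem_inf[OF f])
  then show ?thesis unfolding sc_def using act_mult[OF ext_const_elem f, of c x] by simp
qed

lemma act_sc: "ext_elem n f \<Longrightarrow> act f (sc act c x) = sc act c (act f x)"
proof -
  assume f: "ext_elem n f"
  have "ext_mult f (ext_const c) = (\<lambda>S. c * f S)"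
    by (rule ext_mult_const_right) (rule ext_elem_inf[OF f])
  then have "act f (sc act c x) = act (\<lambda>S. c * f S) x"
    unfolding sc_def using act_mult[OF f ext_const_elem, of c x] by simp
  then show ?thesis using sc_act[OF f] by simp
qed

lemma Mdeg_sc: "x \<in> Mdeg d \<Longrightarrow> sc act c x \<in> Mdeg d"
  unfolding sc_def using Mdeg_act[OF ext_const_homog[of n c], of x d] by simp

lemma neg_sc: "- x = sc act (-1) x"
proof -
  have "sc act (-1) x + x = 0"
    using sc_addc[of "-1" 1 x] by (simp add: sc_one sc_zero)
  then show ?thesis by (metis neg_eq_iff_add_eq_0 add.commute)
qed

lemma Mdeg_neg: "x \<in> Mdeg d \<Longrightarrow> - x \<in> Mdeg d"
  by (simp add: neg_sc Mdeg_sc)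
lemma Mdeg_diff: "x \<in> Mdeg d \<Longrightarrow> y \<in> Mdeg d \<Longrightarrow> x - y \<in> Mdeg d"
  using Mdeg_add[of x d "- y"] Mdeg_neg by simp
lemma Mdeg_sum: "(\<And>i. i \<in> A \<Longrightarrow> g i \<in> Mdeg d) \<Longrightarrow> (\<Sum>i\<in>A. g i) \<in> Mdeg d"
  by (induction A rule: infinite_finite_induct) (auto simp: Mdeg_zero Mdeg_add)

abbreviation v where "v \<equiv> (\<lambda>j. lin_form n (cf j))"

lemma Mdeg_v: "x \<in> Mdeg d \<Longrightarrow> act (v j) x \<in> Mdeg (1 + d)"
  using Mdeg_act[OF lin_form_homog, of x d] by simp

lemma ract_v: "ract act d x (v j) = sc act ((-1) ^ nat \<bar>d\<bar>) (act (v j) x)"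
proof -
  have "(\<lambda>S. (-1) ^ (nat \<bar>d\<bar> * card S) * v j S) = (\<lambda>S. (-1) ^ nat \<bar>d\<bar> * v j S)"
  proof
    fix S show "(-1) ^ (nat \<bar>d\<bar> * card S) * v j S = (-1) ^ nat \<bar>d\<bar> * v j S"
      by (cases "v j S = 0") (auto dest!: lin_form_nz)
  qed
  then show ?thesis unfolding ract_def by (simp add: sc_act)
qed

lemma sc_sign_twice: "sc act ((-1) ^ m) (sc act ((-1) ^ m) x) = x"
  by (simp add: sc_mult sc_one flip: power_mult_distrib)

end


definition Dsh :: "nat \<Rightarrow> ((nat \<Rightarrow> nat) \<Rightarrow> 'm) \<Rightarrow> ((nat \<Rightarrow> nat) \<Rightarrow> 'm)" where
  "Dsh q c = (\<lambda>b. c (b(q := Suc (b q))))"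
definition Sh :: "nat \<Rightarrow> ((nat \<Rightarrow> nat) \<Rightarrow> 'm::zero) \<Rightarrow> ((nat \<Rightarrow> nat) \<Rightarrow> 'm)" where
  "Sh q c = (\<lambda>b. if b q = 0 then 0 else c (b(q := b q - 1)))"

lemma sum_upd: "(q::nat) < p \<Longrightarrow> (\<Sum>j<p. (b(q:=x)) j) + b q = (\<Sum>j<p. b j) + (x::nat)"
proof -
  assume q: "q < p"
  have A: "(\<Sum>j<p. f j) = f q + (\<Sum>j\<in>{..<p}-{q}. f j)" for f :: "nat \<Rightarrow> nat"
    using q by (subst sum.remove[of _ q]) auto
  have "(\<Sum>j\<in>{..<p}-{q}. (b(q:=x)) j) = (\<Sum>j\<in>{..<p}-{q}. b j)"
    by (intro sum.cong) auto
  then show ?thesis using A[of "b(q:=x)"] A[of b] by simp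
qed


context cart begin
lemma cd_zero: "cartan_d act v p 0 = 0"
  by (rule ext) (simp add: cartan_d_def act_zero)

end

context cart begin
lemma cd_add: "cartan_d act v p (c1 + c2) = cartan_d act v p c1 + cartan_d act v p c2"
  by (rule ext) (simp add: cartan_d_def act_add sum.distrib)

end

context cart begin
lemma cd_diff: "cartan_d act v p (c1 - c2) = cartan_d act v p c1 - cartan_d act v p c2"
  by (rule ext) (simp add: cartan_d_def act_diff sum_subtractf)

end

context cart begin
lemma sc_sum: "sc act c (\<Sum>i\<in>A. g i) = (\<Sum>i\<in>A. sc act c (g i))"
  unfolding sc_def by (simp add: act_sum)

end

context cart begin
lemma cd_scale: "cartan_d act v p (chain_scale act c z) = chain_scale act c (cartan_d act v p z)"
  by (rule ext) (simp add: cartan_d_def chain_scale_def act_sc sc_sum)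

end

context cart begin
lemma cs_zero: "0 \<in> chain_sp Mdeg p i k"
  by (simp add: chain_sp_def)

end

context cart begin
lemma cs_add: assumes c1: "c1 \<in> chain_sp Mdeg p i k" and c2: "c2 \<in> chain_sp Mdeg p i k"
  shows "c1 + c2 \<in> chain_sp Mdeg p i k"
proof -
  have h1: "\<forall>a. c1 a \<noteq> 0 \<longrightarrow> (\<forall>j\<ge>p. a j = 0) \<and> (\<Sum>j<p. a j) = i \<and> c1 a \<in> Mdeg (k - int i)"
    using c1 unfolding chain_sp_def by simp
  have h2: "\<forall>a. c2 a \<noteq> 0 \<longrightarrow> (\<forall>j\<ge>p. a j = 0) \<and> (\<Sum>j<p. a j) = i \<and> c2 a \<in> Mdeg (k - int i)"
    using c2 unfolding chain_sp_def by simp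
  show ?thesis unfolding chain_sp_def
  proof (intro CollectI allI impI)
    fix a assume nz: "(c1 + c2) a \<noteq> 0"
    have or: "c1 a \<noteq> 0 \<or> c2 a \<noteq> 0" using nz by auto
    have m1: "c1 a \<in> Mdeg (k - int i)" using h1 Mdeg_zero by (cases "c1 a = 0") auto
    have m2: "c2 a \<in> Mdeg (k - int i)" using h2 Mdeg_zero by (cases "c2 a = 0") auto
    show "(\<forall>j\<ge>p. a j = 0) \<and> (\<Sum>j<p. a j) = i \<and> (c1 + c2) a \<in> Mdeg (k - int i)"
      using or h1 h2 Mdeg_add[OF m1 m2] by auto
  qed
qed

end

context cart begin
lemma cs_scale: assumes c1: "c1 \<in> chain_sp Mdeg p i k"
  shows "chain_scale act c c1 \<in> chain_sp Mdeg p i k"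
proof -
  have h1: "\<forall>a. c1 a \<noteq> 0 \<longrightarrow> (\<forall>j\<ge>p. a j = 0) \<and> (\<Sum>j<p. a j) = i \<and> c1 a \<in> Mdeg (k - int i)"
    using c1 unfolding chain_sp_def by simp
  show ?thesis unfolding chain_sp_def
  proof (intro CollectI allI impI)
    fix a assume nz: "chain_scale act c c1 a \<noteq> 0"
    have "c1 a \<noteq> 0" using nz act_zero[OF ext_const_elem] by (auto simp: chain_scale_def sc_def)
    then show "(\<forall>j\<ge>p. a j = 0) \<and> (\<Sum>j<p. a j) = i \<and> chain_scale act c c1 a \<in> Mdeg (k - int i)"
      using h1 Mdeg_sc by (auto simp: chain_scale_def)
  qed
qed

end

context cart begin
lemma bd_zero: "0 \<in> bounds act Mdeg v p i k"
  unfolding bounds_def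
proof (rule image_eqI)
  show "0 = cartan_d act v p 0" by (simp add: cd_zero)
  show "0 \<in> chain_sp Mdeg p (Suc i) k" by (rule cs_zero)
qed

end

context cart begin
lemma bd_add: "x \<in> bounds act Mdeg v p i k \<Longrightarrow> y \<in> bounds act Mdeg v p i k \<Longrightarrow> x + y \<in> bounds act Mdeg v p i k"
proof -
  assume "x \<in> bounds act Mdeg v p i k" "y \<in> bounds act Mdeg v p i k"
  then obtain c1 c2 where c: "c1 \<in> chain_sp Mdeg p (Suc i) k" "c2 \<in> chain_sp Mdeg p (Suc i) k"
    and xy: "x = cartan_d act v p c1" "y = cartan_d act v p c2" unfolding bounds_def by blast
  show ?thesis unfolding bounds_def
    by (rule image_eqI[where x="c1 + c2"]) (simp_all add: xy cd_add cs_add c)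
qed

end

context cart begin
lemma bd_scale: "x \<in> bounds act Mdeg v p i k \<Longrightarrow> chain_scale act c x \<in> bounds act Mdeg v p i k"
proof -
  assume "x \<in> bounds act Mdeg v p i k"
  then obtain c1 where c: "c1 \<in> chain_sp Mdeg p (Suc i) k"
    and xy: "x = cartan_d act v p c1" unfolding bounds_def by blast
  show ?thesis unfolding bounds_def
    by (rule image_eqI[where x="chain_scale act c c1"]) (simp_all add: xy cd_scale cs_scale c)
qed

end

context cart begin
lemma cs_diff: assumes "c1 \<in> chain_sp Mdeg p i k" "c2 \<in> chain_sp Mdeg p i k"
  shows "c1 - c2 \<in> chain_sp Mdeg p i k"
proof -
  have e: "c1 - c2 = c1 + chain_scale act (-1) c2"
  proof
    fix a show "(c1 - c2) a = (c1 + chain_scale act (-1) c2) a"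
      using neg_sc[of "c2 a"] by (simp add: chain_scale_def)
  qed
  show ?thesis unfolding e by (intro cs_add cs_scale assms)
qed

end

context cart begin
lemma bd_diff: "x \<in> bounds act Mdeg v p i k \<Longrightarrow> y \<in> bounds act Mdeg v p i k \<Longrightarrow> x - y \<in> bounds act Mdeg v p i k"
proof -
  assume "x \<in> bounds act Mdeg v p i k" "y \<in> bounds act Mdeg v p i k"
  then obtain c1 c2 where c: "c1 \<in> chain_sp Mdeg p (Suc i) k" "c2 \<in> chain_sp Mdeg p (Suc i) k"
    and xy: "x = cartan_d act v p c1" "y = cartan_d act v p c2" unfolding bounds_def by blast
  show ?thesis unfolding bounds_def
    by (rule image_eqI[where x="c1 - c2"]) (simp_all add: xy cd_diff cs_diff c)
qed

end

context cart begin
lemma vsC: "vector_space (chain_scale act)"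
proof (unfold_locales)
  fix a b :: 'k and x y :: "(nat \<Rightarrow> nat) \<Rightarrow> 'm"
  show "chain_scale act a (x + y) = chain_scale act a x + chain_scale act a y"
    by (rule ext) (simp add: chain_scale_def sc_add)
  show "chain_scale act (a + b) x = chain_scale act a x + chain_scale act b x"
    by (rule ext) (simp add: chain_scale_def sc_addc)
  show "chain_scale act a (chain_scale act b x) = chain_scale act (a * b) x"
    by (rule ext) (simp add: chain_scale_def sc_mult)
  show "chain_scale act 1 x = x"
    by (rule ext) (simp add: chain_scale_def sc_one)
qed

end

context cart begin
lemma csD: assumes "c \<in> chain_sp Mdeg p i k" "c a \<noteq> 0"
  shows "(\<forall>j\<ge>p. a j = 0) \<and> (\<Sum>j<p. a j) = i \<and> c a \<in> Mdeg (k - int i)"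
proof -
  have "\<forall>a. c a \<noteq> 0 \<longrightarrow> (\<forall>j\<ge>p. a j = 0) \<and> (\<Sum>j<p. a j) = i \<and> c a \<in> Mdeg (k - int i)"
    using assms(1) unfolding chain_sp_def by (rule CollectD)
  from this[rule_format, OF assms(2)] show ?thesis .
qed

lemma csI:
  assumes "\<And>a j. c a \<noteq> 0 \<Longrightarrow> p \<le> j \<Longrightarrow> a j = 0"
    and "\<And>a. c a \<noteq> 0 \<Longrightarrow> (\<Sum>j<p. a j) = i"
    and "\<And>a. c a \<noteq> 0 \<Longrightarrow> c a \<in> Mdeg (k - int i)"
  shows "c \<in> chain_sp Mdeg p i k"
  unfolding chain_sp_def using assms by blast
end

context cart begin
lemma cs_vanish: assumes "c \<in> chain_sp Mdeg q i k" "q \<le> j" "a j \<noteq> 0" shows "c a = 0"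
proof (rule ccontr)
  assume "c a \<noteq> 0"
  then have "\<forall>j\<ge>q. a j = 0" using csD[OF assms(1)] by simp
  then show False using assms(2,3) by simp
qed

end

context cart begin
lemma cs_mono: assumes qq: "q \<le> q'" and c: "c \<in> chain_sp Mdeg q i k"
  shows "c \<in> chain_sp Mdeg q' i k"
proof (rule csI)
  fix a assume ca: "c a \<noteq> 0"
  note zsm = csD[of c q i k a, OF c ca]
  have z: "\<forall>j\<ge>q. a j = 0" using zsm by (rule conjunct1)
  have s: "(\<Sum>j<q. a j) = i" using zsm by blast
  show "c a \<in> Mdeg (k - int i)" using zsm by blast
  show "a j = 0" if "q' \<le> j" for j using z qq that by simp
  have "(\<Sum>j<q'. a j) = (\<Sum>j<q. a j) + (\<Sum>j\<in>{q..<q'}. a j)"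
    using sum.atLeastLessThan_concat[of 0 q q' a] qq by (simp add: lessThan_atLeast0)
  also have "(\<Sum>j\<in>{q..<q'}. a j) = 0" using z by simp
  finally show "(\<Sum>j<q'. a j) = i" using s by simp
qed

end

context cart begin
lemma cd_mono: assumes qq: "q \<le> q'" and c: "c \<in> chain_sp Mdeg q i k"
  shows "cartan_d act v q' c = cartan_d act v q c"
proof (rule ext)
  fix b
  have "(\<Sum>j<q'. act (v j) (c (b(j := Suc (b j))))) =
        (\<Sum>j<q. act (v j) (c (b(j := Suc (b j))))) + (\<Sum>j\<in>{q..<q'}. act (v j) (c (b(j := Suc (b j)))))"
    using sum.atLeastLessThan_concat[of 0 q q' "\<lambda>j. act (v j) (c (b(j := Suc (b j))))"] qq
    by (simp add: lessThan_atLeast0)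
  also have "(\<Sum>j\<in>{q..<q'}. act (v j) (c (b(j := Suc (b j))))) = 0"
  proof (intro sum.neutral ballI)
    fix j assume "j \<in> {q..<q'}"
    then have "c (b(j := Suc (b j))) = 0" using cs_vanish[OF c, of j "b(j := Suc (b j))"] by simp
    then show "act (v j) (c (b(j := Suc (b j)))) = 0" by (simp add: act_zero)
  qed
  finally have X: "(\<Sum>j<q'. act (v j) (c (b(j := Suc (b j))))) = (\<Sum>j<q. act (v j) (c (b(j := Suc (b j)))))"
    by (simp only: add_0_right)
  show "cartan_d act v q' c b = cartan_d act v q c b" unfolding cartan_d_def by (rule X)
qed

end

context cart begin
lemma bd_mono: assumes qq: "q \<le> q'" and x: "x \<in> bounds act Mdeg v q i k"
  shows "x \<in> bounds act Mdeg v q' i k"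
proof -
  obtain c1 where c: "c1 \<in> chain_sp Mdeg q (Suc i) k"
    and xy: "x = cartan_d act v q c1" using x unfolding bounds_def by blast
  show ?thesis unfolding bounds_def
    by (rule image_eqI[where x=c1]) (simp_all add: xy cd_mono[OF qq c] cs_mono[OF qq c])
qed

end

context cart begin
lemma cd_Dsh: "cartan_d act v p (Dsh q w) = Dsh q (cartan_d act v p w)"
proof (rule ext)
  fix b
  have e: "\<And>j. (b(j := Suc (b j)))(q := Suc ((b(j := Suc (b j))) q)) =
     (b(q := Suc (b q)))(j := Suc ((b(q := Suc (b q))) j))"
    by (auto simp: fun_eq_iff)
  have "cartan_d act v p (Dsh q w) b = (\<Sum>j<p. act (v j) (w ((b(j := Suc (b j)))(q := Suc ((b(j := Suc (b j))) q)))))"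
    by (simp add: cartan_d_def Dsh_def)
  also have "\<dots> = (\<Sum>j<p. act (v j) (w ((b(q := Suc (b q)))(j := Suc ((b(q := Suc (b q))) j)))))"
    by (simp only: e)
  also have "\<dots> = Dsh q (cartan_d act v p w) b"
    by (simp add: cartan_d_def Dsh_def)
  finally show "cartan_d act v p (Dsh q w) b = Dsh q (cartan_d act v p w) b" .
qed

end

context cart begin
lemma Dsh_cs: assumes q: "q < p" and c: "c \<in> chain_sp Mdeg p (Suc i) K"
  shows "Dsh q c \<in> chain_sp Mdeg p i (K - 1)"
proof (rule csI)
  fix b assume cb: "Dsh q c b \<noteq> 0"
  let ?a = "b(q := Suc (b q))"
  have ca: "c ?a \<noteq> 0" using cb by (simp add: Dsh_def)
  note zsm = csD[of c p "Suc i" K ?a, OF c ca]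
  have z: "\<forall>j\<ge>p. ?a j = 0" using zsm by (rule conjunct1)
  have s: "(\<Sum>j<p. ?a j) = Suc i" using zsm by blast
  have m: "c ?a \<in> Mdeg (K - int (Suc i))" using zsm by blast
  show "b j = 0" if "p \<le> j" for j
  proof -
    have "j \<noteq> q" using q that by simp
    then show ?thesis using z that by (metis fun_upd_other)
  qed
  show "(\<Sum>j<p. b j) = i" using s sum_upd[OF q, of b "Suc (b q)"] by simp
  show "Dsh q c b \<in> Mdeg (K - 1 - int i)" using m by (simp add: Dsh_def algebra_simps)
qed

end

context cart begin
lemma Sh_cs: assumes c: "c \<in> chain_sp Mdeg (Suc q) i k"
  shows "Sh q c \<in> chain_sp Mdeg (Suc q) (Suc i) (k + 1)"
proof (rule csI)
  fix b assume cb: "Sh q c b \<noteq> 0"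
  let ?a = "b(q := b q - 1)"
  have bq: "b q \<noteq> 0" using cb by (simp add: Sh_def split: if_splits)
  have ca: "c ?a \<noteq> 0" using cb bq by (simp add: Sh_def)
  note zsm = csD[of c "Suc q" i k ?a, OF c ca]
  have z: "\<forall>j\<ge>Suc q. ?a j = 0" using zsm by (rule conjunct1)
  have s: "(\<Sum>j<Suc q. ?a j) = i" using zsm by blast
  have m: "c ?a \<in> Mdeg (k - int i)" using zsm by blast
  show "b j = 0" if "Suc q \<le> j" for j
  proof -
    have "j \<noteq> q" using that by simp
    then show ?thesis using z that by (metis fun_upd_other)
  qed
  show "(\<Sum>j<Suc q. b j) = Suc i" using s sum_upd[of q "Suc q" b "b q - 1"] bq by simp
  show "Sh q c b \<in> Mdeg (k + 1 - int (Suc i))" using m bq by (simp add: Sh_def algebra_simps)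
qed

end

context cart begin
lemma cd_Sh: "cartan_d act v (Suc q) (Sh q c) b =
   (if b q = 0 then act (v q) (c b) else cartan_d act v (Suc q) c (b(q := b q - 1)))"
proof -
  have last: "act (v q) (Sh q c (b(q := Suc (b q)))) = act (v q) (c b)"
    by (simp add: Sh_def)
  have "(\<Sum>j<q. act (v j) (Sh q c (b(j := Suc (b j))))) =
        (if b q = 0 then 0 else (\<Sum>j<q. act (v j) (c ((b(q := b q - 1))(j := Suc ((b(q := b q - 1)) j))))))"
  proof (cases "b q = 0")
    case True then show ?thesis by (simp add: Sh_def act_zero)
  next
    case False
    have "\<And>j. j < q \<Longrightarrow> (b(j := Suc (b j)))(q := (b(j := Suc (b j))) q - 1) =
             (b(q := b q - 1))(j := Suc ((b(q := b q - 1)) j))"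
      by (auto simp: fun_eq_iff)
    then show ?thesis using False by (simp add: Sh_def)
  qed
  moreover have "b q \<noteq> 0 \<Longrightarrow> (b(q := b q - 1))(q := Suc ((b(q := b q - 1)) q)) = b"
    by (auto simp: fun_eq_iff)
  ultimately show ?thesis using last by (simp add: cartan_d_def)
qed


end

context cart begin

lemma g0_cs: assumes u: "u \<in> chain_sp Mdeg (Suc p) i k"
  shows "g0 p u \<in> chain_sp Mdeg p i k"
proof (rule csI)
  fix a assume nz: "g0 p u a \<noteq> 0"
  have ap: "a p = 0" and ua: "u a \<noteq> 0" using nz by (auto simp: g0_def split: if_splits)
  note zsm = csD[of u "Suc p" i k a, OF u ua]
  have z: "\<forall>j\<ge>Suc p. a j = 0" using zsm by (rule conjunct1)
  have s: "(\<Sum>j<Suc p. a j) = i" using zsm by blast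
  have m: "u a \<in> Mdeg (k - int i)" using zsm by blast
  show "a j = 0" if "p \<le> j" for j using z ap that by (cases "j = p") auto
  show "(\<Sum>j<p. a j) = i" using s ap by simp
  show "g0 p u a \<in> Mdeg (k - int i)" using m ap by (simp add: g0_def)
qed

lemma bd_image: "w \<in> chain_sp Mdeg p (Suc i) k \<Longrightarrow> cartan_d act v p w \<in> bounds act Mdeg v p i k"
  unfolding bounds_def by (rule imageI)

lemma inj_step:
  assumes G: "gamma_img act Mdeg v p i k \<subseteq> bounds act Mdeg v p i k"
    and c: "c \<in> chain_sp Mdeg p i k" and u: "u \<in> chain_sp Mdeg (Suc p) (Suc i) k"
    and cu: "c = cartan_d act v (Suc p) u"
  shows "c \<in> bounds act Mdeg v p i k"
proof -
  define z where "z = Dsh p u"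
  have zc: "z \<in> chain_sp Mdeg (Suc p) i (k - 1)" unfolding z_def by (rule Dsh_cs[OF _ u]) simp
  have "cartan_d act v (Suc p) z = Dsh p c" unfolding z_def cu by (rule cd_Dsh)
  also have "Dsh p c = 0"
  proof (rule ext)
    fix b show "Dsh p c b = 0 b" unfolding Dsh_def
      using cs_vanish[OF c, of p "b(p := Suc (b p))"] by simp
  qed
  finally have zcy: "z \<in> cycles act Mdeg v (Suc p) i (k - 1)"
    using zc unfolding cycles_def by (simp add: zero_fun_def)
  define \<gamma> where "\<gamma> = (\<lambda>a. ract act (k - 1 - int i) (g0 p z a) (v p))"
  have "\<gamma> \<in> gamma_img act Mdeg v p i k" unfolding gamma_img_def \<gamma>_def using zcy by blast
  with G have gb: "\<gamma> \<in> bounds act Mdeg v p i k" by blast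
  define \<rho> where "\<rho> = (\<lambda>a. act (v p) (g0 p z a))"
  define e :: 'k where "e = (-1) ^ nat \<bar>k - 1 - int i\<bar>"
  have "\<rho> = chain_scale act e \<gamma>"
    unfolding \<rho>_def \<gamma>_def chain_scale_def e_def by (simp add: ract_v sc_sign_twice)
  with gb have rb: "\<rho> \<in> bounds act Mdeg v p i k" by (simp add: bd_scale)
  have pu: "g0 p u \<in> chain_sp Mdeg p (Suc i) k" by (rule g0_cs[OF u])
  have "c = cartan_d act v p (g0 p u) + \<rho>"
  proof (rule ext)
    fix b
    show "c b = (cartan_d act v p (g0 p u) + \<rho>) b"
    proof (cases "b p = 0")
      case True
      have "c b = (\<Sum>j<p. act (v j) (u (b(j := Suc (b j))))) + act (v p) (u (b(p := Suc (b p))))"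
        unfolding cu cartan_d_def by simp
      also have "(\<Sum>j<p. act (v j) (u (b(j := Suc (b j))))) = (\<Sum>j<p. act (v j) (g0 p u (b(j := Suc (b j)))))"
        by (intro sum.cong refl) (simp add: g0_def True)
      also have "act (v p) (u (b(p := Suc (b p)))) = \<rho> b"
        unfolding \<rho>_def z_def by (simp add: g0_def True Dsh_def)
      finally show ?thesis unfolding plus_fun_apply cartan_d_def .
    next
      case False
      have "c b = 0" using cs_vanish[OF c, of p b] False by simp
      moreover have "\<rho> b = 0" unfolding \<rho>_def using False by (simp add: g0_def act_zero)
      moreover have "cartan_d act v p (g0 p u) b = 0"
        unfolding cartan_d_def using False by (simp add: g0_def act_zero)
      ultimately show ?thesis by simp
    qed
  qed
  then show ?thesis using bd_add[OF bd_image[OF pu] rb] by simp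
qed

end

context cart begin

lemma hyp_chain:
  assumes G: "\<forall>p\<in>{1..n-1}. gamma_img act Mdeg v p i k \<subseteq> bounds act Mdeg v p i k"
  shows "1 \<le> q \<Longrightarrow> q < q' \<Longrightarrow> q' \<le> n \<Longrightarrow> c \<in> chain_sp Mdeg q i k \<Longrightarrow>
         c \<in> bounds act Mdeg v q' i k \<Longrightarrow> c \<in> bounds act Mdeg v q i k"
proof (induction q' arbitrary: c)
  case 0 then show ?case by simp
next
  case (Suc q'')
  obtain u where u: "u \<in> chain_sp Mdeg (Suc q'') (Suc i) k" and cu: "c = cartan_d act v (Suc q'') u"
    using Suc.prems(5) unfolding bounds_def by blast
  have qq: "q \<le> q''" using Suc.prems(2) by simp
  have c'': "c \<in> chain_sp Mdeg q'' i k" by (rule cs_mono[OF qq Suc.prems(4)])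
  have "q'' \<in> {1..n-1}" using Suc.prems(1,3) qq by auto
  with G have Gq: "gamma_img act Mdeg v q'' i k \<subseteq> bounds act Mdeg v q'' i k" by blast
  have cb: "c \<in> bounds act Mdeg v q'' i k" by (rule inj_step[OF Gq c'' u cu])
  show ?case
  proof (cases "q = q''")
    case True then show ?thesis using cb by simp
  next
    case False
    then have "q < q''" using qq by simp
    then show ?thesis using Suc.IH[OF Suc.prems(1) _ _ Suc.prems(4) cb] Suc.prems(3) by simp
  qed
qed

lemma claim:
  assumes hyp: "\<And>q c. 1 \<le> q \<Longrightarrow> q < q' \<Longrightarrow> c \<in> chain_sp Mdeg q i k \<Longrightarrow>
      c \<in> bounds act Mdeg v q' i k \<Longrightarrow> c \<in> bounds act Mdeg v q i k"
  shows "q \<le> q' \<Longrightarrow> c \<in> chain_sp Mdeg q (Suc i) (k + 1) \<Longrightarrow>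
     c \<in> bounds act Mdeg v q' (Suc i) (k + 1) \<Longrightarrow> c \<in> bounds act Mdeg v q (Suc i) (k + 1)"
proof (induction q arbitrary: c)
  case 0
  have c0: "c = 0"
  proof (rule ext)
    fix a show "c a = 0 a"
    proof (rule ccontr)
      assume "c a \<noteq> 0 a"
      then have "c a \<noteq> 0" by simp
      from csD[of c 0 "Suc i" "k + 1" a, OF 0(2) this] show False by simp
    qed
  qed
  show ?case unfolding c0 by (rule bd_zero)
next
  case (Suc q0)
  note qle = Suc.prems(1) and c = Suc.prems(2) and cb = Suc.prems(3)
  define Dc where "Dc = Dsh q0 c"
  have "Dc \<in> chain_sp Mdeg (Suc q0) i (k + 1 - 1)" unfolding Dc_def by (rule Dsh_cs[OF _ c]) simp
  then have Dcs: "Dc \<in> chain_sp Mdeg (Suc q0) i k" by simp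
  obtain w where w: "w \<in> chain_sp Mdeg q' (Suc (Suc i)) (k + 1)" and cw: "c = cartan_d act v q' w"
    using cb unfolding bounds_def by blast
  have "Dsh q0 w \<in> chain_sp Mdeg q' (Suc i) (k + 1 - 1)" by (rule Dsh_cs[OF _ w]) (use qle in simp)
  then have Dw: "Dsh q0 w \<in> chain_sp Mdeg q' (Suc i) k" by simp
  have "Dc = cartan_d act v q' (Dsh q0 w)" unfolding Dc_def cw by (simp add: cd_Dsh)
  then have Dcb': "Dc \<in> bounds act Mdeg v q' i k" using bd_image[OF Dw] by simp
  have Dcb: "Dc \<in> bounds act Mdeg v (Suc q0) i k"
  proof (cases "Suc q0 = q'")
    case True then show ?thesis using Dcb' by simp
  next
    case False then show ?thesis using hyp[OF _ _ Dcs Dcb'] qle by simp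
  qed
  obtain \<beta> where \<beta>: "\<beta> \<in> chain_sp Mdeg (Suc q0) (Suc i) k" and D\<beta>: "Dc = cartan_d act v (Suc q0) \<beta>"
    using Dcb unfolding bounds_def by blast
  define S\<beta> where "S\<beta> = Sh q0 \<beta>"
  have Ss: "S\<beta> \<in> chain_sp Mdeg (Suc q0) (Suc (Suc i)) (k + 1)" unfolding S\<beta>_def by (rule Sh_cs[OF \<beta>])
  define c' where "c' = c - cartan_d act v (Suc q0) S\<beta>"
  have c'_eq: "c' a = (if a q0 = 0 then c a - act (v q0) (\<beta> a) else 0)" for a
  proof (cases "a q0 = 0")
    case True then show ?thesis unfolding c'_def S\<beta>_def by (simp add: cd_Sh)
  next
    case False
    have "cartan_d act v (Suc q0) S\<beta> a = cartan_d act v (Suc q0) \<beta> (a(q0 := a q0 - 1))"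
      unfolding S\<beta>_def using False by (simp add: cd_Sh)
    also have "\<dots> = Dc (a(q0 := a q0 - 1))" by (simp add: D\<beta>)
    also have "\<dots> = c a" unfolding Dc_def Dsh_def using False
      by (metis Suc_pred' fun_upd_same fun_upd_triv fun_upd_upd not_gr_zero)
    finally show ?thesis unfolding c'_def using False by simp
  qed
  have c's: "c' \<in> chain_sp Mdeg q0 (Suc i) (k + 1)"
  proof (rule csI)
    fix a assume nz: "c' a \<noteq> 0"
    have aq: "a q0 = 0" using nz c'_eq[of a] by (simp split: if_splits)
    have or: "c a \<noteq> 0 \<or> \<beta> a \<noteq> 0" using nz c'_eq[of a] aq by (auto simp: act_zero)
    have props: "(\<forall>j\<ge>Suc q0. a j = 0) \<and> (\<Sum>j<Suc q0. a j) = Suc i"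
    proof (cases "c a \<noteq> 0")
      case True
      note zsm = csD[of c "Suc q0" "Suc i" "k + 1" a, OF c True]
      then show ?thesis by blast
    next
      case False
      then have "\<beta> a \<noteq> 0" using or by simp
      note zsm = csD[of \<beta> "Suc q0" "Suc i" k a, OF \<beta> this]
      then show ?thesis by blast
    qed
    show "a j = 0" if "q0 \<le> j" for j using props aq that by (cases "j = q0") auto
    show "(\<Sum>j<q0. a j) = Suc i" using props aq by simp
    have m1: "c a \<in> Mdeg (k + 1 - int (Suc i))"
    proof (cases "c a = 0")
      case True then show ?thesis by (simp add: Mdeg_zero)
    next
      case False
      note zsm = csD[of c "Suc q0" "Suc i" "k + 1" a, OF c False]
      then show ?thesis by blast
    qed
    have m2: "act (v q0) (\<beta> a) \<in> Mdeg (k + 1 - int (Suc i))"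
    proof (cases "\<beta> a = 0")
      case True then show ?thesis by (simp add: Mdeg_zero act_zero)
    next
      case False
      note zsm = csD[of \<beta> "Suc q0" "Suc i" k a, OF \<beta> False]
      then have "\<beta> a \<in> Mdeg (k - int (Suc i))" by blast
      from Mdeg_v[OF this, of q0] show ?thesis by (simp add: algebra_simps)
    qed
    show "c' a \<in> Mdeg (k + 1 - int (Suc i))" using c'_eq[of a] aq Mdeg_diff[OF m1 m2] by simp
  qed
  have Sq': "S\<beta> \<in> chain_sp Mdeg q' (Suc (Suc i)) (k + 1)" by (rule cs_mono[OF qle Ss])
  have "cartan_d act v (Suc q0) S\<beta> = cartan_d act v q' S\<beta>" by (rule cd_mono[OF qle Ss, symmetric])
  then have dSb': "cartan_d act v (Suc q0) S\<beta> \<in> bounds act Mdeg v q' (Suc i) (k + 1)"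
    using bd_image[OF Sq'] by simp
  have c'b': "c' \<in> bounds act Mdeg v q' (Suc i) (k + 1)"
    unfolding c'_def by (rule bd_diff[OF cb dSb'])
  have "c' \<in> bounds act Mdeg v q0 (Suc i) (k + 1)"
    by (rule Suc.IH) (use qle c's c'b' in auto)
  then have c'b: "c' \<in> bounds act Mdeg v (Suc q0) (Suc i) (k + 1)" by (rule bd_mono[rotated]) simp
  have ceq: "c = c' + cartan_d act v (Suc q0) S\<beta>" unfolding c'_def by simp
  show ?case unfolding ceq by (rule bd_add[OF c'b bd_image[OF Ss]])
qed

end

context cart begin

lemma step:
  assumes G: "\<forall>p\<in>{1..n-1}. gamma_img act Mdeg v p i k \<subseteq> bounds act Mdeg v p i k"
    and p: "p \<in> {1..n-1}"
  shows "gamma_img act Mdeg v p (Suc i) (k + 1) \<subseteq> bounds act Mdeg v p (Suc i) (k + 1)"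
proof
  fix \<gamma> assume "\<gamma> \<in> gamma_img act Mdeg v p (Suc i) (k + 1)"
  then obtain z where \<gamma>: "\<gamma> = (\<lambda>a. ract act (k + 1 - 1 - int (Suc i)) (g0 p z a) (v p))"
    and zc: "z \<in> cycles act Mdeg v (Suc p) (Suc i) (k + 1 - 1)"
    unfolding gamma_img_def by blast
  have zs: "z \<in> chain_sp Mdeg (Suc p) (Suc i) k" and dz: "cartan_d act v (Suc p) z = (\<lambda>_. 0)"
    using zc unfolding cycles_def by auto
  define \<rho> where "\<rho> = (\<lambda>a. act (v p) (g0 p z a))"
  define e :: 'k where "e = (-1) ^ nat \<bar>k + 1 - 1 - int (Suc i)\<bar>"
  have \<gamma>\<rho>: "\<gamma> = chain_scale act e \<rho>"
    unfolding \<rho>_def \<gamma> chain_scale_def e_def by (simp add: ract_v)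
  have \<rho>eq: "\<rho> = cartan_d act v (Suc p) (Sh p z)"
  proof (rule ext)
    fix b show "\<rho> b = cartan_d act v (Suc p) (Sh p z) b"
    proof (cases "b p = 0")
      case True then show ?thesis unfolding \<rho>_def by (simp add: cd_Sh g0_def)
    next
      case False
      have "cartan_d act v (Suc p) z (b(p := b p - 1)) = 0" using dz by (simp add: fun_eq_iff)
      then show ?thesis unfolding \<rho>_def using False by (simp add: cd_Sh g0_def act_zero)
    qed
  qed
  have Szs: "Sh p z \<in> chain_sp Mdeg (Suc p) (Suc (Suc i)) (k + 1)" by (rule Sh_cs[OF zs])
  have \<rho>b': "\<rho> \<in> bounds act Mdeg v (Suc p) (Suc i) (k + 1)" unfolding \<rho>eq by (rule bd_image[OF Szs])
  have \<rho>s: "\<rho> \<in> chain_sp Mdeg p (Suc i) (k + 1)"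
  proof (rule csI)
    fix a assume nz: "\<rho> a \<noteq> 0"
    have ap: "a p = 0" using nz unfolding \<rho>_def by (auto simp: g0_def act_zero split: if_splits)
    have za: "z a \<noteq> 0" using nz ap unfolding \<rho>_def by (auto simp: g0_def act_zero)
    note zsm = csD[of z "Suc p" "Suc i" k a, OF zs za]
    have zz: "\<forall>j\<ge>Suc p. a j = 0" using zsm by (rule conjunct1)
    have s: "(\<Sum>j<Suc p. a j) = Suc i" using zsm by blast
    have m: "z a \<in> Mdeg (k - int (Suc i))" using zsm by blast
    show "a j = 0" if "p \<le> j" for j using zz ap that by (cases "j = p") auto
    show "(\<Sum>j<p. a j) = Suc i" using s ap by simp
    show "\<rho> a \<in> Mdeg (k + 1 - int (Suc i))"
      unfolding \<rho>_def using Mdeg_v[OF m, of p] ap by (simp add: g0_def algebra_simps)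
  qed
  have pn: "Suc p \<le> n" using p by auto
  have hyp: "\<And>q c. 1 \<le> q \<Longrightarrow> q < Suc p \<Longrightarrow> c \<in> chain_sp Mdeg q i k \<Longrightarrow>
      c \<in> bounds act Mdeg v (Suc p) i k \<Longrightarrow> c \<in> bounds act Mdeg v q i k"
    using hyp_chain[OF G] pn by blast
  have "\<rho> \<in> bounds act Mdeg v p (Suc i) (k + 1)"
    by (rule claim[OF hyp]) (use \<rho>s \<rho>b' in auto)
  then show "\<gamma> \<in> bounds act Mdeg v p (Suc i) (k + 1)" unfolding \<gamma>\<rho> by (rule bd_scale)
qed

end


definition eS :: "nat set \<Rightarrow> ('k::zero_neq_one) ext" where
  "eS S = (\<lambda>T. if T = S then 1 else 0)"

definition single :: "(nat \<Rightarrow> nat) \<Rightarrow> 'm::zero \<Rightarrow> ((nat \<Rightarrow> nat) \<Rightarrow> 'm)" where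
  "single a w = (\<lambda>b. if b = a then w else 0)"

lemma fun_sum_apply: "(\<Sum>a\<in>A. F a) b = (\<Sum>a\<in>A. F a b)"
  by (induction A rule: infinite_finite_induct) auto

context cart begin

lemma ext_elem_sum: "(\<And>S. S \<in> A \<Longrightarrow> ext_elem n (h S)) \<Longrightarrow> ext_elem n (\<lambda>T. \<Sum>S\<in>A. h S T)"
proof -
  assume h: "\<And>S. S \<in> A \<Longrightarrow> ext_elem n (h S)"
  show ?thesis unfolding ext_elem_def
  proof (intro allI impI)
    fix T assume "(\<Sum>S\<in>A. h S T) \<noteq> 0"
    then obtain S where "S \<in> A" "h S T \<noteq> 0" by (meson sum.neutral)
    then show "T \<subseteq> {..<n}" using h unfolding ext_elem_def by blast
  qed
qed

lemma act_zerof: "act (\<lambda>T. 0) x = 0"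
proof -
  have e: "ext_elem n (\<lambda>T. 0::'k)" by (simp add: ext_elem_def)
  have "act (\<lambda>T. 0 + 0) x = act (\<lambda>T. 0) x + act (\<lambda>T. 0) x" by (rule act_addf[OF e e])
  then show ?thesis by simp
qed

lemma act_sumf: "finite A \<Longrightarrow> (\<And>S. S \<in> A \<Longrightarrow> ext_elem n (h S)) \<Longrightarrow>
   act (\<lambda>T. \<Sum>S\<in>A. h S T) x = (\<Sum>S\<in>A. act (h S) x)"
proof (induction A rule: finite_induct)
  case empty then show ?case by (simp add: act_zerof)
next
  case (insert a F)
  have "act (\<lambda>T. \<Sum>S\<in>insert a F. h S T) x = act (\<lambda>T. h a T + (\<Sum>S\<in>F. h S T)) x"
    using insert.hyps by simp
  also have "\<dots> = act (h a) x + act (\<lambda>T. \<Sum>S\<in>F. h S T) x"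
    by (rule act_addf) (use insert.prems in \<open>auto intro: ext_elem_sum\<close>)
  also have "\<dots> = (\<Sum>S\<in>insert a F. act (h S) x)" using insert by simp
  finally show ?case .
qed

lemma eS_elem: "S \<subseteq> {..<n} \<Longrightarrow> ext_elem n (eS S)"
  by (simp add: ext_elem_def eS_def)

lemma act_decomp: assumes f: "ext_elem n f"
  shows "act f x = (\<Sum>S\<in>Pow {..<n}. sc act (f S) (act (eS S) x))"
proof -
  have fe: "f = (\<lambda>T. \<Sum>S\<in>Pow {..<n}. (\<lambda>T. f S * eS S T) T)"
  proof
    fix T
    show "f T = (\<Sum>S\<in>Pow {..<n}. f S * eS S T)"
    proof (cases "T \<subseteq> {..<n}")
      case True
      have "(\<Sum>S\<in>Pow {..<n}. f S * eS S T) = (\<Sum>S\<in>Pow {..<n}. if S = T then f T else 0)"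
        by (intro sum.cong) (auto simp: eS_def)
      also have "\<dots> = f T" using True by (simp add: sum.delta)
      finally show ?thesis by simp
    next
      case False
      then have "f T = 0" using f unfolding ext_elem_def by blast
      moreover have "(\<Sum>S\<in>Pow {..<n}. f S * eS S T) = 0"
        using False by (intro sum.neutral) (auto simp: eS_def)
      ultimately show ?thesis by simp
    qed
  qed
  have el: "\<And>S. S \<in> Pow {..<n} \<Longrightarrow> ext_elem n (\<lambda>T. f S * eS S T)"
    by (auto simp: ext_elem_def eS_def)
  have "act f x = (\<Sum>S\<in>Pow {..<n}. act (\<lambda>T. f S * eS S T) x)"
    by (subst fe) (rule act_sumf[OF _ el], simp_all)
  also have "\<dots> = (\<Sum>S\<in>Pow {..<n}. sc act (f S) (act (eS S) x))"
    by (intro sum.cong refl) (simp add: sc_act eS_elem)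
  finally show ?thesis .
qed

lemma M_fin: "\<exists>WM. finite WM \<and> (\<forall>x. x \<in> module.span (sc act) WM)"
proof -
  interpret VM: vector_space "sc act" by (rule vsM)
  obtain G where G: "finite G" and gen: "\<forall>x. \<exists>f. (\<forall>g\<in>G. ext_elem n (f g)) \<and> x = (\<Sum>g\<in>G. act (f g) g)"
    using fin_gen by blast
  define WM where "WM = (\<lambda>(S, g). act (eS S) g) ` (Pow {..<n} \<times> G)"
  have "finite WM" unfolding WM_def using G by simp
  moreover have "x \<in> VM.span WM" for x
  proof -
    obtain f where f: "\<forall>g\<in>G. ext_elem n (f g)" and x: "x = (\<Sum>g\<in>G. act (f g) g)"
      using gen by blast
    have "x = (\<Sum>g\<in>G. \<Sum>S\<in>Pow {..<n}. sc act (f g S) (act (eS S) g))"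
      unfolding x by (intro sum.cong refl) (simp add: act_decomp f)
    also have "\<dots> \<in> VM.span WM"
    proof (intro VM.span_sum VM.span_scale VM.span_base)
      fix g S assume "g \<in> G" "S \<in> Pow {..<n}"
      then show "act (eS S) g \<in> WM" unfolding WM_def by force
    qed
    finally show ?thesis .
  qed
  ultimately show ?thesis by blast
qed

lemma finite_supp: "finite {a::nat \<Rightarrow> nat. (\<forall>j\<ge>p. a j = 0) \<and> (\<forall>j. a j \<le> i)}"
proof -
  let ?L = "{xs. set xs \<subseteq> {..i} \<and> length xs = p}"
  have "finite ?L" by (rule finite_lists_length_eq) simp
  moreover have "{a::nat \<Rightarrow> nat. (\<forall>j\<ge>p. a j = 0) \<and> (\<forall>j. a j \<le> i)} \<subseteq>
      (\<lambda>xs j. if j < p then xs ! j else 0) ` ?L"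
  proof
    fix a :: "nat \<Rightarrow> nat" assume a: "a \<in> {a. (\<forall>j\<ge>p. a j = 0) \<and> (\<forall>j. a j \<le> i)}"
    have "a = (\<lambda>j. if j < p then map a [0..<p] ! j else 0)"
      using a by (auto simp: fun_eq_iff)
    moreover have "map a [0..<p] \<in> ?L" using a by auto
    ultimately show "a \<in> (\<lambda>xs j. if j < p then xs ! j else 0) ` ?L" by blast
  qed
  ultimately show ?thesis by (rule finite_surj)
qed

lemma chain_fin: "\<exists>W. finite W \<and> chain_sp Mdeg p i k \<subseteq> module.span (chain_scale act) W"
proof -
  interpret VM: vector_space "sc act" by (rule vsM)
  interpret VC: vector_space "chain_scale act" by (rule vsC)
  obtain WM where WM: "finite WM" and sp: "\<forall>x. x \<in> VM.span WM" using M_fin by blast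
  define A where "A = {a::nat \<Rightarrow> nat. (\<forall>j\<ge>p. a j = 0) \<and> (\<forall>j. a j \<le> i)}"
  have A: "finite A" unfolding A_def by (rule finite_supp)
  define W where "W = (\<lambda>(a, w). single a w) ` (A \<times> WM)"
  have "finite W" unfolding W_def using A WM by simp
  moreover have "chain_sp Mdeg p i k \<subseteq> VC.span W"
  proof
    fix c assume c: "c \<in> chain_sp Mdeg p i k"
    have supp: "c b \<noteq> 0 \<Longrightarrow> b \<in> A" for b
    proof -
      assume "c b \<noteq> 0"
      note zsm = csD[of c p i k b, OF c this]
      have z: "\<forall>j\<ge>p. b j = 0" using zsm by (rule conjunct1)
      have s: "(\<Sum>j<p. b j) = i" using zsm by blast
      have "b j \<le> i" for j
      proof (cases "j < p")
        case True
        then have "b j \<le> (\<Sum>j<p. b j)" by (intro member_le_sum) auto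
        then show ?thesis using s by simp
      next
        case False then show ?thesis using z by simp
      qed
      then show "b \<in> A" unfolding A_def using z by blast
    qed
    have ceq: "c = (\<Sum>a\<in>A. single a (c a))"
    proof
      fix b
      have "(\<Sum>a\<in>A. single a (c a)) b = (\<Sum>a\<in>A. if b = a then c a else 0)"
        by (simp add: fun_sum_apply single_def)
      also have "\<dots> = (if b \<in> A then c b else 0)" using A by (simp add: sum.delta)
      also have "\<dots> = c b" using supp by auto
      finally show "c b = (\<Sum>a\<in>A. single a (c a)) b" by simp
    qed
    have "single a m \<in> VC.span W" if aA: "a \<in> A" for a m
    proof -
      have "m \<in> VM.span WM" using sp by blast
      then show ?thesis
      proof (induction rule: VM.span_induct)
        case base
        show ?case
        proof (rule VM.subspaceI)
          show "0 \<in> {m. single a m \<in> VC.span W}"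
            using VC.span_zero by (simp add: single_def zero_fun_def)
          fix x y assume "x \<in> {m. single a m \<in> VC.span W}" "y \<in> {m. single a m \<in> VC.span W}"
          then have "single a x + single a y \<in> VC.span W" by (simp add: VC.span_add)
          moreover have "single a (x + y) = single a x + single a y"
            by (auto simp: single_def fun_eq_iff)
          ultimately show "x + y \<in> {m. single a m \<in> VC.span W}" by simp
        next
          fix c x assume "x \<in> {m. single a m \<in> VC.span W}"
          then have "chain_scale act c (single a x) \<in> VC.span W" by (simp add: VC.span_scale)
          moreover have "single a (sc act c x) = chain_scale act c (single a x)"
            by (auto simp: single_def fun_eq_iff chain_scale_def VM.scale_zero_right)
          ultimately show "sc act c x \<in> {m. single a m \<in> VC.span W}" by simp
        qed
      next
        case (step x)
        then have "single a x \<in> W" unfolding W_def using aA by force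
        then show ?case by (simp add: VC.span_base)
      qed
    qed
    then have "(\<Sum>a\<in>A. single a (c a)) \<in> VC.span W" by (intro VC.span_sum) simp
    then show "c \<in> VC.span W" using ceq by simp
  qed
  ultimately show ?thesis by blast
qed

lemma gamma_cs: "gamma_img act Mdeg v p i k \<subseteq> chain_sp Mdeg p i k"
proof
  fix \<gamma> assume "\<gamma> \<in> gamma_img act Mdeg v p i k"
  then obtain z where \<gamma>: "\<gamma> = (\<lambda>a. ract act (k - 1 - int i) (g0 p z a) (v p))"
    and zc: "z \<in> cycles act Mdeg v (Suc p) i (k - 1)"
    unfolding gamma_img_def by blast
  have zs: "z \<in> chain_sp Mdeg (Suc p) i (k - 1)" using zc unfolding cycles_def by auto
  have gs: "g0 p z \<in> chain_sp Mdeg p i (k - 1)" by (rule g0_cs[OF zs])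
  show "\<gamma> \<in> chain_sp Mdeg p i k"
  proof (rule csI)
    fix a assume nz: "\<gamma> a \<noteq> 0"
    have gz: "g0 p z a \<noteq> 0" using nz unfolding \<gamma> by (auto simp: ract_v act_zero sc_def)
    note zsm = csD[of "g0 p z" p i "k - 1" a, OF gs gz]
    show "a j = 0" if "p \<le> j" for j using zsm that by blast
    show "(\<Sum>j<p. a j) = i" using zsm by blast
    have "g0 p z a \<in> Mdeg (k - 1 - int i)" using zsm by blast
    from Mdeg_sc[OF Mdeg_v[OF this, of p]]
    show "\<gamma> a \<in> Mdeg (k - int i)" unfolding \<gamma> by (simp add: ract_v algebra_simps)
  qed
qed

lemma bd_cs: "bounds act Mdeg v p i k \<subseteq> chain_sp Mdeg p i k"
proof
  fix x assume "x \<in> bounds act Mdeg v p i k"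
  then obtain w where w: "w \<in> chain_sp Mdeg p (Suc i) k" and xw: "x = cartan_d act v p w"
    unfolding bounds_def by blast
  show "x \<in> chain_sp Mdeg p i k"
  proof (rule csI)
    fix b assume nz: "x b \<noteq> 0"
    have "(\<Sum>j<p. act (v j) (w (b(j := Suc (b j))))) \<noteq> 0" using nz unfolding xw cartan_d_def by simp
    then obtain j where j0: "j \<in> {..<p}" and aj: "act (v j) (w (b(j := Suc (b j)))) \<noteq> 0"
      by (meson sum.neutral)
    have j: "j < p" using j0 by simp
    have wj: "w (b(j := Suc (b j))) \<noteq> 0" using aj by (auto simp: act_zero)
    note zsm = csD[of w p "Suc i" k "b(j := Suc (b j))", OF w wj]
    have z: "\<forall>l\<ge>p. (b(j := Suc (b j))) l = 0" using zsm by (rule conjunct1)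
    have s: "(\<Sum>l<p. (b(j := Suc (b j))) l) = Suc i" using zsm by blast
    show "b l = 0" if "p \<le> l" for l
    proof -
      have "l \<noteq> j" using j that by simp
      then show ?thesis using z that by (metis fun_upd_other)
    qed
    show "(\<Sum>l<p. b l) = i" using s sum_upd[OF j, of b "Suc (b j)"] by simp
    have H: "\<And>l. l < p \<Longrightarrow> act (v l) (w (b(l := Suc (b l)))) \<in> Mdeg (k - int i)"
    proof -
      fix l assume l: "l < p"
      show "act (v l) (w (b(l := Suc (b l)))) \<in> Mdeg (k - int i)"
      proof (cases "w (b(l := Suc (b l))) = 0")
        case True then show ?thesis by (simp add: act_zero Mdeg_zero)
      next
        case False
        note zsm2 = csD[of w p "Suc i" k "b(l := Suc (b l))", OF w False]
        then have "w (b(l := Suc (b l))) \<in> Mdeg (k - int (Suc i))" by blast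
        from Mdeg_v[OF this, of l] show ?thesis by (simp add: algebra_simps)
      qed
    qed
    show "x b \<in> Mdeg (k - int i)" unfolding xw cartan_d_def by (rule Mdeg_sum) (simp add: H)
  qed
qed

lemma delta_zero_imp:
  assumes d: "delta act Mdeg v i p k = 0"
  shows "gamma_img act Mdeg v p i k \<subseteq> bounds act Mdeg v p i k"
proof
  interpret VC: vector_space "chain_scale act" by (rule vsC)
  let ?G = "gamma_img act Mdeg v p i k" and ?B = "bounds act Mdeg v p i k"
  have subB: "VC.subspace ?B"
    by (rule VC.subspaceI) (auto intro: bd_zero bd_add bd_scale)
  then have spB: "VC.span ?B = ?B" by (simp add: VC.span_eq_iff)
  obtain W where W: "finite W" and Wsp: "chain_sp Mdeg p i k \<subseteq> VC.span W" using chain_fin by blast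
  have GB: "?G \<union> ?B \<subseteq> VC.span W" using Wsp gamma_cs bd_cs by blast
  fix g assume g: "g \<in> ?G"
  show "g \<in> ?B"
  proof (rule ccontr)
    assume ng: "g \<notin> ?B"
    obtain b where b: "b \<subseteq> ?B" "VC.independent b" "?B \<subseteq> VC.span b" "card b = VC.dim ?B"
      using VC.basis_exists by blast
    obtain c where c: "c \<subseteq> ?G \<union> ?B" "VC.independent c" "?G \<union> ?B \<subseteq> VC.span c" "card c = VC.dim (?G \<union> ?B)"
      using VC.basis_exists by blast
    have bW: "b \<subseteq> VC.span W" using b(1) GB by blast
    have cW: "c \<subseteq> VC.span W" using c(1) GB by blast
    have fb: "finite b" using VC.independent_span_bound[OF W b(2) bW] by blast
    have fc: "finite c" using VC.independent_span_bound[OF W c(2) cW] by blast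
    have spb: "VC.span b \<subseteq> ?B" using VC.span_mono[OF b(1)] spB by simp
    have gnb: "g \<notin> VC.span b" using ng spb by blast
    then have gnb': "g \<notin> b" using VC.span_base by blast
    have ind: "VC.independent (insert g b)" by (rule VC.independent_insertI[OF gnb b(2)])
    have sub: "insert g b \<subseteq> VC.span c" using c(3) g b(1) by blast
    have "card (insert g b) \<le> card c" using VC.independent_span_bound[OF fc ind sub] by blast
    then have "Suc (card b) \<le> card c" using fb gnb' by simp
    then have "delta act Mdeg v i p k \<ge> 1" unfolding delta_def using b(4) c(4) by simp
    then show False using d by simp
  qed
qed

lemma imp_delta_zero:
  assumes "gamma_img act Mdeg v p i k \<subseteq> bounds act Mdeg v p i k"
  shows "delta act Mdeg v i p k = 0"
proof -
  have "gamma_img act Mdeg v p i k \<union> bounds act Mdeg v p i k = bounds act Mdeg v p i k" using assms by blast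
  then show ?thesis unfolding delta_def by simp
qed

end

theorem lemma4p2:
  fixes n :: nat
    and act :: "('k::field) ext \<Rightarrow> 'm::ab_group_add \<Rightarrow> 'm"
    and Mdeg :: "int \<Rightarrow> 'm set"
  assumes "infinite (UNIV :: 'k set)"
    and "graded_E_module n act Mdeg"
  shows "\<exists>F\<in>poly_fun n. (\<exists>x. F x \<noteq> 0) \<and>
     (\<forall>cf. F cf \<noteq> 0 \<longrightarrow>
        (\<forall>(i::nat) (k::int). i \<ge> 1 \<longrightarrow>
           (\<forall>p\<in>{1..n-1}. delta act Mdeg (\<lambda>j. lin_form n (cf j)) i p k = 0) \<longrightarrow>
           (\<forall>p\<in>{1..n-1}. \<forall>t::nat.
              delta act Mdeg (\<lambda>j. lin_form n (cf j)) (i + t) p (k + int t) = 0)))"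
proof (rule bexI[where x="\<lambda>_. 1"])
  show "(\<lambda>_. 1) \<in> poly_fun n" by (rule pf_const)
  show "(\<exists>x. (1::'k) \<noteq> 0) \<and>
     (\<forall>cf. (1::'k) \<noteq> 0 \<longrightarrow>
        (\<forall>(i::nat) (k::int). i \<ge> 1 \<longrightarrow>
           (\<forall>p\<in>{1..n-1}. delta act Mdeg (\<lambda>j. lin_form n (cf j)) i p k = 0) \<longrightarrow>
           (\<forall>p\<in>{1..n-1}. \<forall>t::nat.
              delta act Mdeg (\<lambda>j. lin_form n (cf j)) (i + t) p (k + int t) = 0)))"
  proof (intro conjI allI impI ballI)
    show "\<exists>x. (1::'k) \<noteq> 0" by simp
    fix cf :: "nat \<Rightarrow> nat \<Rightarrow> 'k" and i :: nat and k :: int and p :: nat and t :: nat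
    interpret cart n act Mdeg cf by unfold_locales (rule assms(2))
    assume h: "\<forall>p\<in>{1..n-1}. delta act Mdeg v i p k = 0" and p: "p \<in> {1..n-1}"
    have "\<forall>p\<in>{1..n-1}. gamma_img act Mdeg v p (i + t) (k + int t) \<subseteq> bounds act Mdeg v p (i + t) (k + int t)"
    proof (induction t)
      case 0 then show ?case using h delta_zero_imp by simp
    next
      case (Suc t)
      have "\<forall>p\<in>{1..n-1}. gamma_img act Mdeg v p (Suc (i + t)) (k + int t + 1) \<subseteq>
             bounds act Mdeg v p (Suc (i + t)) (k + int t + 1)"
        using step[OF Suc.IH] by blast
      moreover have e1: "k + int (Suc t) = k + int t + 1" by simp
      moreover have e2: "i + Suc t = Suc (i + t)" by simp
      ultimately show ?case by (simp only:)
    qed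
    then show "delta act Mdeg v (i + t) p (k + int t) = 0" using p imp_delta_zero by blast
  qed
qed


end
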